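(* Let $K$ be a field and $R$ a von Neumann regular, right self-injective $K$-algebra possessing a bounded basis. Then $R$ is completely reducible (semisimple).
   Context: Let $B$ be a $K$-linear basis of a $K$-algebra $R$. For $r\in R$ write $r=\sum_{b\in B}bk_b$, $\mathrm{supp}(r)=\{b\mid k_b\neq0\}$, $\mathrm{cs}(r)=|\mathrm{supp}(r)|$. $B$ is $k$-bounded ($1\le k<\omega$) if $\mathrm{cs}(bb')\le k$ for all $b,b'\in B$, and $B$ is bounded if it is $k$-bounded for some $1\le k<\omega$. *)

theory Defs
  imports Complex_Main
begin

definition is_K_algebra :: "('k::field \<Rightarrow> 'r::ring_1 \<Rightarrow> 'r) \<Rightarrow> bool" where
  "is_K_algebra scale \<longleftrightarrow> vector_space scale \<and>
     (\<forall>k a b. scale k (a * b) = scale k a * b \<and> scale k (a * b) = a * scale k b)"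

definition is_basis :: "('k::field \<Rightarrow> 'r::ring_1 \<Rightarrow> 'r) \<Rightarrow> 'r set \<Rightarrow> bool" where
  "is_basis scale B \<longleftrightarrow> \<not> module.dependent scale B \<and> module.span scale B = UNIV"

definition supp :: "('k::field \<Rightarrow> 'r::ring_1 \<Rightarrow> 'r) \<Rightarrow> 'r set \<Rightarrow> 'r \<Rightarrow> 'r set" where
  "supp scale B r = {b\<in>B. module.representation scale B r b \<noteq> 0}"

definition cs :: "('k::field \<Rightarrow> 'r::ring_1 \<Rightarrow> 'r) \<Rightarrow> 'r set \<Rightarrow> 'r \<Rightarrow> nat" where
  "cs scale B r = card (supp scale B r)"

definition k_bounded :: "('k::field \<Rightarrow> 'r::ring_1 \<Rightarrow> 'r) \<Rightarrow> 'r set \<Rightarrow> nat \<Rightarrow> bool" where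
  "k_bounded scale B k \<longleftrightarrow> 1 \<le> k \<and> (\<forall>b\<in>B. \<forall>b'\<in>B. cs scale B (b * b') \<le> k)"

definition bounded_basis :: "('k::field \<Rightarrow> 'r::ring_1 \<Rightarrow> 'r) \<Rightarrow> 'r set \<Rightarrow> bool" where
  "bounded_basis scale B \<longleftrightarrow> is_basis scale B \<and> (\<exists>k. k_bounded scale B k)"

definition von_Neumann_regular :: "'r::ring_1 itself \<Rightarrow> bool" where
  "von_Neumann_regular _ \<longleftrightarrow> (\<forall>a::'r. \<exists>x. a * x * a = a)"

definition right_ideal :: "'r::ring_1 set \<Rightarrow> bool" where
  "right_ideal I \<longleftrightarrow> 0 \<in> I \<and> (\<forall>x\<in>I. \<forall>y\<in>I. x + y \<in> I) \<and> (\<forall>x\<in>I. - x \<in> I)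
     \<and> (\<forall>x\<in>I. \<forall>r. x * r \<in> I)"

definition right_hom_on :: "'r::ring_1 set \<Rightarrow> ('r \<Rightarrow> 'r) \<Rightarrow> bool" where
  "right_hom_on I f \<longleftrightarrow> (\<forall>x\<in>I. \<forall>y\<in>I. f (x + y) = f x + f y) \<and> (\<forall>x\<in>I. \<forall>r. f (x * r) = f x * r)"

text \<open>Right self-injective (R_R injective), via Baer's criterion: every right module
  homomorphism from a right ideal into R_R extends to an endomorphism of R_R.\<close>
definition right_self_injective :: "'r::ring_1 itself \<Rightarrow> bool" where
  "right_self_injective _ \<longleftrightarrow>
     (\<forall>(I::'r set) f. right_ideal I \<and> right_hom_on I f \<longrightarrow>
        (\<exists>g. right_hom_on UNIV g \<and> (\<forall>x\<in>I. g x = f x)))"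

definition minimal_right_ideal :: "'r::ring_1 set \<Rightarrow> bool" where
  "minimal_right_ideal I \<longleftrightarrow> right_ideal I \<and> I \<noteq> {0} \<and>
     (\<forall>J. right_ideal J \<and> J \<subseteq> I \<longrightarrow> J = {0} \<or> J = I)"

definition completely_reducible :: "'r::ring_1 itself \<Rightarrow> bool" where
  "completely_reducible _ \<longleftrightarrow>
     (\<forall>r::'r. \<exists>(n::nat) xs. (\<forall>i<n. \<exists>I. minimal_right_ideal I \<and> xs i \<in> I) \<and> r = (\<Sum>i<n. xs i))"

end

theory Submission
  imports Defs "HOL-Library.Nat_Bijection"
begin

definition leq :: "'r::ring_1 \<Rightarrow> 'r \<Rightarrow> bool" where
  "leq p c \<longleftrightarrow> c * p = p \<and> p * c = p"

lemma leq_trans: "leq q p \<Longrightarrow> leq p c \<Longrightarrow> leq q c"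
  unfolding leq_def by (metis mult.assoc)

lemma seq_lemma:
  fixes M :: "'r::ring_1 set" and step :: "'r \<Rightarrow> 'r"
  assumes H: "\<And>c. c\<in>M \<Longrightarrow> c*c = c \<and> step c * step c = step c \<and> step c \<noteq> 0 \<and> leq (step c) c \<and> c - step c \<in> M"
    and c0: "c0 \<in> M"
  shows "\<exists>f::nat\<Rightarrow>'r. (\<forall>n. f n * f n = f n \<and> f n \<noteq> 0) \<and> (\<forall>n m. n \<noteq> m \<longrightarrow> f n * f m = 0)"
proof -
  define cc where "cc n = ((\<lambda>c. c - step c) ^^ n) c0" for n
  have ccM: "cc n \<in> M" for n
    by (induction n) (auto simp: cc_def c0 H)
  have ccS: "cc (Suc n) = cc n - step (cc n)" for n by (simp add: cc_def)
  have le1: "leq (cc (Suc n)) (cc n)" for n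
  proof -
    have "cc n * cc n = cc n" "leq (step (cc n)) (cc n)" using H ccM by auto
    then show ?thesis unfolding ccS leq_def by (simp add: algebra_simps)
  qed
  have le2: "leq (cc (n + d)) (cc n)" for n d
  proof (induction d)
    case 0
    have "cc n * cc n = cc n" using H ccM by auto
    then show ?case by (simp add: leq_def)
  next
    case (Suc d)
    then show ?case using le1[of "n+d"] leq_trans by auto
  qed
  define f where "f n = step (cc n)" for n
  have orth: "f n * f m = 0 \<and> f m * f n = 0" if "n < m" for n m
  proof -
    have a: "leq (f m) (cc (Suc n))"
    proof -
      have "leq (f m) (cc m)" using H ccM f_def by auto
      moreover have "leq (cc m) (cc (Suc n))" using le2[of "Suc n" "m - Suc n"] that by simp
      ultimately show ?thesis using leq_trans by blast
    qed
    have b: "f n * cc (Suc n) = 0" "cc (Suc n) * f n = 0"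
      using H[OF ccM[of n]] unfolding ccS f_def leq_def by (auto simp: algebra_simps)
    have "f n * f m = f n * (cc (Suc n) * f m)" using a leq_def by metis
    also have "\<dots> = 0" using b by (simp add: mult.assoc[symmetric])
    finally have 1: "f n * f m = 0" .
    have "f m * f n = (f m * cc (Suc n)) * f n" using a leq_def by metis
    also have "\<dots> = 0" using b by (simp add: mult.assoc)
    finally show ?thesis using 1 by simp
  qed
  show ?thesis
  proof (intro exI conjI allI impI)
    fix n show "f n * f n = f n" "f n \<noteq> 0" using H ccM f_def by auto
  next
    fix n m :: nat assume "n \<noteq> m"
    then show "f n * f m = 0" using orth by (cases "n < m") (auto simp: not_less_iff_gr_or_eq)
  qed
qed

definition orthseq :: "(nat \<Rightarrow> 'r::ring_1) \<Rightarrow> bool" where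
  "orthseq f \<longleftrightarrow> (\<forall>n. f n * f n = f n \<and> f n \<noteq> 0) \<and> (\<forall>n m. n \<noteq> m \<longrightarrow> f n * f m = 0)"

lemma right_ideal_range: "right_ideal (range ((*) (c::'r::ring_1)))"
  unfolding right_ideal_def
proof (intro conjI ballI allI)
  show "0 \<in> range ((*) c)" by (metis mult_zero_right rangeI)
  fix x y assume "x \<in> range ((*) c)" "y \<in> range ((*) c)"
  then show "x + y \<in> range ((*) c)" by (auto simp: distrib_left[symmetric])
next
  fix x assume "x \<in> range ((*) c)"
  then obtain u where "x = c * u" by blast
  then have "- x = c * (- u)" by simp
  then show "- x \<in> range ((*) c)" by blast
next
  fix x r assume "x \<in> range ((*) c)"
  then obtain u where "x = c * u" by blast
  then have "x * r = c * (u * r)" by (simp add: mult.assoc)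
  then show "x * r \<in> range ((*) c)" by blast
qed

lemma split_nonminimal:
  fixes c :: "'r::ring_1"
  assumes reg: "von_Neumann_regular TYPE('r)" and idc: "c*c = c" and c0: "c \<noteq> 0"
    and nm: "\<not> minimal_right_ideal (range ((*) c))"
  shows "\<exists>p. p*p = p \<and> p \<noteq> 0 \<and> leq p c \<and> c - p \<noteq> 0"
proof -
  have cin: "c \<in> range ((*) c)" by (metis mult.right_neutral rangeI)
  have "range ((*) c) \<noteq> {0}" using cin c0 by auto
  then obtain J where J: "right_ideal J" "J \<subseteq> range ((*) c)" "J \<noteq> {0}" "J \<noteq> range ((*) c)"
    using nm right_ideal_range unfolding minimal_right_ideal_def by blast
  have "0 \<in> J" using J(1) right_ideal_def by blast
  then obtain a where a: "a \<in> J" "a \<noteq> 0" using J(3) by blast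
  obtain z where z: "a * z * a = a" using reg von_Neumann_regular_def by blast
  define p0 where "p0 = a * z"
  have p0J: "p0 \<in> J" using J(1) a(1) unfolding p0_def right_ideal_def by blast
  have cp0: "c * p0 = p0" using p0J J(2) idc by (auto simp: mult.assoc[symmetric])
  have ca: "c * a = a" using a(1) J(2) idc by (auto simp: mult.assoc[symmetric])
  have p0p0: "p0 * p0 = p0" unfolding p0_def using z by (metis mult.assoc)
  define p where "p = p0 * c"
  have "p * p = p" unfolding p_def by (metis cp0 p0p0 mult.assoc)
  moreover have "leq p c" unfolding leq_def p_def using cp0 idc by (metis mult.assoc)
  moreover have "p \<noteq> 0"
  proof
    assume "p = 0"
    then have "p * a = 0" by simp
    moreover have "p * a = a" unfolding p_def using ca z p0_def by (metis mult.assoc)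
    ultimately show False using a by simp
  qed
  moreover have "c - p \<noteq> 0"
  proof
    assume "c - p = 0"
    then have "c = p0 * c" unfolding p_def by simp
    then have cJ: "c \<in> J" using p0J J(1) unfolding right_ideal_def by metis
    have "range ((*) c) \<subseteq> J" using cJ J(1) unfolding right_ideal_def by auto
    then show False using J by blast
  qed
  ultimately show ?thesis by blast
qed

lemma reduce:
  assumes reg: "von_Neumann_regular TYPE('r::ring_1)"
    and noseq: "\<not> (\<exists>f::nat \<Rightarrow> 'r. orthseq f)"
  shows "completely_reducible TYPE('r)"
proof -
  define Ma where "Ma = {c::'r. c*c = c \<and> c \<noteq> 0 \<and>
     \<not>(\<exists>g. g*g = g \<and> g \<noteq> 0 \<and> leq g c \<and> minimal_right_ideal (range ((*) g)))}"
  define stepa where "stepa c = (SOME p. p*p = p \<and> p \<noteq> 0 \<and> leq p c \<and> c - p \<noteq> 0)" for c :: 'r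
  have Ma_empty: "Ma = {}"
  proof (rule ccontr)
    assume "Ma \<noteq> {}"
    then obtain c0 where c0: "c0 \<in> Ma" by blast
    have "\<And>c. c\<in>Ma \<Longrightarrow> c*c = c \<and> stepa c * stepa c = stepa c \<and> stepa c \<noteq> 0 \<and> leq (stepa c) c \<and> c - stepa c \<in> Ma"
    proof -
      fix c assume cM: "c \<in> Ma"
      have cc: "c*c = c" "c \<noteq> 0" using cM Ma_def by auto
      have "leq c c" using cc leq_def by auto
      then have "\<not> minimal_right_ideal (range ((*) c))" using cM Ma_def by blast
      then have ex: "\<exists>p. p*p = p \<and> p \<noteq> 0 \<and> leq p c \<and> c - p \<noteq> 0"
        using split_nonminimal[OF reg cc(1) cc(2)] by blast
      define p where "p = stepa c"
      have p: "p*p = p" "p \<noteq> 0" "leq p c" "c - p \<noteq> 0"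
        using someI_ex[OF ex] unfolding p_def stepa_def by auto
      have lcp: "leq (c - p) c" using p(3) cc unfolding leq_def by (simp add: algebra_simps)
      have idcp: "(c - p) * (c - p) = c - p" using p cc unfolding leq_def by (simp add: algebra_simps)
      have "c - p \<in> Ma"
        using cM p(4) idcp lcp leq_trans unfolding Ma_def by blast
      then show "c*c = c \<and> stepa c * stepa c = stepa c \<and> stepa c \<noteq> 0 \<and> leq (stepa c) c \<and> c - stepa c \<in> Ma"
        using cc p p_def by auto
    qed
    from seq_lemma[OF this c0] noseq show False unfolding orthseq_def by blast
  qed
  define SR where "SR c = (\<forall>r. \<exists>(n::nat) xs. (\<forall>i<n. \<exists>I. minimal_right_ideal I \<and> xs i \<in> I) \<and> c * r = (\<Sum>i<n. xs i))" for c :: 'r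
  define Mb where "Mb = {c::'r. c*c = c \<and> c \<noteq> 0 \<and> \<not> SR c}"
  define stepb where "stepb c = (SOME g. g*g = g \<and> g \<noteq> 0 \<and> leq g c \<and> minimal_right_ideal (range ((*) g)))" for c :: 'r
  have "SR 1"
  proof (rule ccontr)
    assume n1: "\<not> SR 1"
    have "\<And>c. c\<in>Mb \<Longrightarrow> c*c = c \<and> stepb c * stepb c = stepb c \<and> stepb c \<noteq> 0 \<and> leq (stepb c) c \<and> c - stepb c \<in> Mb"
    proof -
      fix c assume cM: "c \<in> Mb"
      have cc: "c*c = c" "c \<noteq> 0" "\<not> SR c" using cM Mb_def by auto
      then have "c \<notin> Ma" using Ma_empty by auto
      then have ex: "\<exists>g. g*g = g \<and> g \<noteq> 0 \<and> leq g c \<and> minimal_right_ideal (range ((*) g))"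
        using cc Ma_def by blast
      define g where "g = stepb c"
      have g: "g*g = g" "g \<noteq> 0" "leq g c" "minimal_right_ideal (range ((*) g))"
        using someI_ex[OF ex] unfolding g_def stepb_def by auto
      have idcg: "(c - g) * (c - g) = c - g" using g cc unfolding leq_def by (simp add: algebra_simps)
      have "c - g \<noteq> 0"
      proof
        assume "c - g = 0"
        then have "c = g" by simp
        have "SR c" unfolding SR_def
        proof
          fix r show "\<exists>(n::nat) xs. (\<forall>i<n. \<exists>I. minimal_right_ideal I \<and> xs i \<in> I) \<and> c * r = (\<Sum>i<n. xs i)"
            by (rule exI[of _ 1], rule exI[of _ "\<lambda>_. g * r"]) (use g(4) \<open>c = g\<close> in auto)
        qed
        then show False using cc by simp
      qed
      moreover have "\<not> SR (c - g)"
      proof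
        assume S: "SR (c - g)"
        have "SR c" unfolding SR_def
        proof
          fix r
          obtain n :: nat and xs where nx: "\<forall>i<n. \<exists>I. minimal_right_ideal I \<and> xs i \<in> I" "(c - g) * r = (\<Sum>i<n. xs i)"
            using S unfolding SR_def by blast
          define ys where "ys i = (if i < n then xs i else g * r)" for i
          have "(\<Sum>i<Suc n. ys i) = (\<Sum>i<n. xs i) + g * r" by (simp add: ys_def)
          also have "\<dots> = c * r" using nx(2) by (simp add: algebra_simps)
          finally have e: "c * r = (\<Sum>i<Suc n. ys i)" by simp
          have "\<forall>i<Suc n. \<exists>I. minimal_right_ideal I \<and> ys i \<in> I"
            using nx(1) g(4) unfolding ys_def by (auto simp: less_Suc_eq)
          with e show "\<exists>(n::nat) xs. (\<forall>i<n. \<exists>I. minimal_right_ideal I \<and> xs i \<in> I) \<and> c * r = (\<Sum>i<n. xs i)"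
            by blast
        qed
        then show False using cc by simp
      qed
      ultimately have "c - g \<in> Mb" using idcg Mb_def by blast
      then show "c*c = c \<and> stepb c * stepb c = stepb c \<and> stepb c \<noteq> 0 \<and> leq (stepb c) c \<and> c - stepb c \<in> Mb"
        using cc g g_def by auto
    qed
    moreover have "1 \<in> Mb" using n1 Mb_def by auto
    ultimately show False using seq_lemma noseq unfolding orthseq_def by blast
  qed
  then show ?thesis unfolding SR_def completely_reducible_def by simp
qed

locale bbasis =
  fixes scale :: "'k::field \<Rightarrow> 'r::ring_1 \<Rightarrow> 'r" and B :: "'r set" and k :: nat
  assumes alg: "is_K_algebra scale" and bas: "is_basis scale B" and kb: "k_bounded scale B k"
begin

sublocale V: vector_space scale using alg unfolding is_K_algebra_def by auto

lemma indepB: "V.independent B" using bas unfolding is_basis_def by auto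
lemma spanB: "x \<in> V.span B" using bas unfolding is_basis_def by auto

abbreviation rep where "rep x \<equiv> V.representation B x"

lemma supp_eq: "supp scale B x = {b. rep x b \<noteq> 0}"
  unfolding supp_def using V.representation_ne_zero by auto

lemma finite_supp: "finite (supp scale B x)"
  unfolding supp_eq by (rule V.finite_representation)

lemma expand: "x = (\<Sum>b\<in>supp scale B x. scale (rep x b) b)"
  unfolding supp_eq using V.sum_nonzero_representation_eq[OF indepB spanB] by simp

lemma rep_sum: "rep (sum v I) = (\<lambda>b. \<Sum>i\<in>I. rep (v i) b)"
  using V.representation_sum[OF indepB spanB] by blast

lemma rep_scale: "rep (scale c v) = (\<lambda>b. c * rep v b)"
  using V.representation_scale[OF indepB spanB] by blast

lemma rep_add: "rep (u + v) = (\<lambda>b. rep u b + rep v b)"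
  using V.representation_add[OF indepB spanB spanB] by blast

lemma rep_diff: "rep (u - v) = (\<lambda>b. rep u b - rep v b)"
  using V.representation_diff[OF indepB spanB spanB] by blast

lemma rep_zero: "rep 0 = (\<lambda>b. 0)"
  by (rule V.representation_zero)

lemma rep_basis: "b \<in> B \<Longrightarrow> rep b = (\<lambda>v. if v = b then 1 else 0)"
  using V.representation_basis[OF indepB] by blast

lemma supp_zero_iff: "supp scale B x = {} \<longleftrightarrow> x = 0"
proof
  assume "supp scale B x = {}"
  then show "x = 0" using expand[of x] by simp
qed (simp add: supp_eq rep_zero)

lemma scale_mult_left: "scale a u * w = scale a (u * w)"
  using alg unfolding is_K_algebra_def by auto
lemma scale_mult_right: "u * scale a w = scale a (u * w)"
  using alg unfolding is_K_algebra_def by metis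

lemma supp_mult: "supp scale B (x * y) \<subseteq> (\<Union>p\<in>supp scale B x \<times> supp scale B y. supp scale B (fst p * snd p))"
proof
  fix t assume t: "t \<in> supp scale B (x * y)"
  let ?Sx = "supp scale B x" and ?Sy = "supp scale B y"
  have "x * y = (\<Sum>b\<in>?Sx. scale (rep x b) b) * (\<Sum>b'\<in>?Sy. scale (rep y b') b')"
    using expand[of x] expand[of y] by simp
  also have "\<dots> = (\<Sum>b\<in>?Sx. \<Sum>b'\<in>?Sy. scale (rep x b * rep y b') (b * b'))"
    by (simp add: sum_product scale_mult_left scale_mult_right mult.commute)
  finally have eq: "x * y = (\<Sum>b\<in>?Sx. \<Sum>b'\<in>?Sy. scale (rep x b * rep y b') (b * b'))" .
  show "t \<in> (\<Union>p\<in>?Sx \<times> ?Sy. supp scale B (fst p * snd p))"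
  proof (rule ccontr)
    assume "t \<notin> (\<Union>p\<in>?Sx \<times> ?Sy. supp scale B (fst p * snd p))"
    then have z: "\<And>b b'. b \<in> ?Sx \<Longrightarrow> b' \<in> ?Sy \<Longrightarrow> rep (b * b') t = 0"
      unfolding supp_eq by force
    have "rep (x * y) t = (\<Sum>b\<in>?Sx. \<Sum>b'\<in>?Sy. (rep x b * rep y b') * rep (b * b') t)"
      by (subst eq) (simp add: rep_sum rep_scale)
    also have "\<dots> = 0" using z by simp
    finally show False using t supp_eq by auto
  qed
qed

lemma cs_mult: "cs scale B (x * y) \<le> k * cs scale B x * cs scale B y"
proof -
  let ?Sx = "supp scale B x" and ?Sy = "supp scale B y"
  have fin: "finite (?Sx \<times> ?Sy)" using finite_supp by auto
  have "cs scale B (x * y) \<le> card (\<Union>p\<in>?Sx \<times> ?Sy. supp scale B (fst p * snd p))"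
    unfolding cs_def by (rule card_mono) (use fin finite_supp supp_mult in auto)
  also have "\<dots> \<le> (\<Sum>p\<in>?Sx \<times> ?Sy. card (supp scale B (fst p * snd p)))"
    by (rule card_UN_le[OF fin])
  also have "\<dots> \<le> (\<Sum>p\<in>?Sx \<times> ?Sy. k)"
  proof (rule sum_mono)
    fix p assume "p \<in> ?Sx \<times> ?Sy"
    then have "fst p \<in> B" "snd p \<in> B" unfolding supp_def by auto
    then show "card (supp scale B (fst p * snd p)) \<le> k"
      using kb unfolding k_bounded_def cs_def by auto
  qed
  also have "\<dots> = k * cs scale B x * cs scale B y"
    by (simp add: card_cartesian_product cs_def)
  finally show ?thesis .
qed

lemma big_supp:
  assumes finS: "finite S" and indS: "V.independent S"
  shows "\<exists>w\<in>V.span S. card S \<le> cs scale B w"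
proof (rule ccontr)
  assume neg: "\<not> ?thesis"
  define D where "D = (\<Union>s\<in>S. supp scale B s)"
  have finD: "finite D" unfolding D_def using finS finite_supp by auto
  have suppD: "supp scale B w \<subseteq> D" if "w \<in> V.span S" for w
  proof
    fix t assume t: "t \<in> supp scale B w"
    have "w \<in> range (\<lambda>u. \<Sum>v\<in>S. scale (u v) v)" using that V.span_finite[OF finS] by simp
    then obtain c where w: "w = (\<Sum>v\<in>S. scale (c v) v)" by blast
    show "t \<in> D"
    proof (rule ccontr)
      assume "t \<notin> D"
      then have "\<And>s. s \<in> S \<Longrightarrow> rep s t = 0" unfolding D_def supp_eq by auto
      then have "rep w t = 0" unfolding w by (simp add: rep_sum rep_scale)
      then show False using t supp_eq by auto
    qed
  qed
  have "\<exists>w. w \<in> V.span S \<and> (\<forall>y. y \<in> V.span S \<longrightarrow> cs scale B y \<le> cs scale B w)"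
  proof (rule ex_has_greatest_nat[where b = "Suc (card D)" and k = 0])
    show "0 \<in> V.span S" by (rule V.span_zero)
    show "\<forall>y. y \<in> V.span S \<longrightarrow> cs scale B y < Suc (card D)"
      using suppD card_mono[OF finD] unfolding cs_def by (simp add: less_Suc_eq_le)
  qed
  then obtain w where w: "w \<in> V.span S" and wmax: "\<And>y. y \<in> V.span S \<Longrightarrow> cs scale B y \<le> cs scale B w"
    by blast
  define T where "T = supp scale B w"
  have TB: "T \<subseteq> B" unfolding T_def supp_def by auto
  have finT: "finite T" unfolding T_def by (rule finite_supp)
  have "\<not> card S \<le> cs scale B w" using neg w by blast
  then have small: "card T < card S" unfolding T_def cs_def by simp
  define P where "P x = (\<Sum>t\<in>T. scale (rep x t) t)" for x
  have repP: "rep (P x) t' = (if t' \<in> T then rep x t' else 0)" for x t'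
  proof -
    have "rep (P x) t' = (\<Sum>t\<in>T. rep x t * rep t t')" unfolding P_def by (simp add: rep_sum rep_scale)
    also have "\<dots> = (\<Sum>t\<in>T. if t = t' then rep x t' else 0)"
      by (rule sum.cong) (use TB rep_basis in auto)
    also have "\<dots> = (if t' \<in> T then rep x t' else 0)" using finT by simp
    finally show ?thesis .
  qed
  have "\<exists>u\<in>V.span S. u \<noteq> 0 \<and> (\<forall>t\<in>T. rep u t = 0)"
  proof (cases "inj_on P S")
    case False
    then obtain s s' where ss: "s \<in> S" "s' \<in> S" "s \<noteq> s'" "P s = P s'" unfolding inj_on_def by blast
    have "s - s' \<in> V.span S" using ss V.span_base V.span_diff by blast
    moreover have "\<forall>t\<in>T. rep (s - s') t = 0"
    proof
      fix t assume "t \<in> T"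
      then have "rep s t = rep s' t" using repP[of s t] repP[of s' t] ss(4) by simp
      then show "rep (s - s') t = 0" by (simp add: rep_diff)
    qed
    moreover have "s - s' \<noteq> 0" using ss(3) by simp
    ultimately show ?thesis by blast
  next
    case True
    have cardPS: "card (P ` S) = card S" using card_image[OF True] .
    have PS: "P ` S \<subseteq> V.span T"
    proof
      fix y assume "y \<in> P ` S"
      then obtain x where "y = P x" by blast
      moreover have "P x \<in> V.span T" unfolding P_def
        by (rule V.span_sum, rule V.span_scale, rule V.span_base)
      ultimately show "y \<in> V.span T" by simp
    qed
    have "V.dependent (P ` S)"
    proof (rule ccontr)
      assume "V.independent (P ` S)"
      from V.independent_span_bound[OF finT this PS] have "card (P ` S) \<le> card T" by simp
      then show False using cardPS small by simp
    qed
    then have "\<exists>c. (\<exists>v\<in>P ` S. c v \<noteq> 0) \<and> (\<Sum>v\<in>P ` S. scale (c v) v) = 0"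
      unfolding V.dependent_finite[OF finite_imageI[OF finS]] .
    then obtain c where c: "\<exists>v\<in>P ` S. c v \<noteq> 0" "(\<Sum>v\<in>P ` S. scale (c v) v) = 0"
      by blast
    define u where "u = (\<Sum>s\<in>S. scale (c (P s)) s)"
    have uspan: "u \<in> V.span S" unfolding u_def
      by (rule V.span_sum, rule V.span_scale, rule V.span_base, assumption)
    have "u \<noteq> 0"
    proof
      assume "u = 0"
      from \<open>u = 0\<close> have "(\<Sum>v\<in>S. scale (c (P v)) v) = 0" unfolding u_def .
      then have "\<forall>s\<in>S. c (P s) = 0"
        using V.independentD[OF indS finS subset_refl, of "\<lambda>v. c (P v)"] by blast
      then show False using c(1) by auto
    qed
    moreover have "\<forall>t\<in>T. rep u t = 0"
    proof
      fix t assume tT: "t \<in> T"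
      have "rep u t = (\<Sum>s\<in>S. c (P s) * rep s t)" unfolding u_def by (simp add: rep_sum rep_scale)
      also have "\<dots> = (\<Sum>s\<in>S. c (P s) * rep (P s) t)" using repP tT by simp
      also have "\<dots> = rep (\<Sum>s\<in>S. scale (c (P s)) (P s)) t" by (simp add: rep_sum rep_scale)
      also have "(\<Sum>s\<in>S. scale (c (P s)) (P s)) = (\<Sum>v\<in>P ` S. scale (c v) v)"
        by (simp add: sum.reindex[OF True])
      finally show "rep u t = 0" using c(2) rep_zero by simp
    qed
    ultimately show ?thesis using uspan by blast
  qed
  then obtain u where u: "u \<in> V.span S" "u \<noteq> 0" "\<forall>t\<in>T. rep u t = 0" by blast
  have su: "supp scale B u \<noteq> {}" using u(2) supp_zero_iff by blast
  have disj: "supp scale B u \<inter> T = {}"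
  proof -
    have "\<And>t. t \<in> T \<Longrightarrow> t \<notin> supp scale B u" using u(3) unfolding supp_eq by simp
    then show ?thesis by blast
  qed
  have un: "supp scale B (w + u) = T \<union> supp scale B u"
  proof (rule set_eqI)
    fix t
    have "rep (w + u) t = rep w t + rep u t" by (simp add: rep_add)
    moreover have "t \<in> T \<Longrightarrow> rep u t = 0" using u(3) by blast
    moreover have "t \<notin> T \<Longrightarrow> rep w t = 0" unfolding T_def supp_eq by simp
    ultimately show "t \<in> supp scale B (w + u) \<longleftrightarrow> t \<in> T \<union> supp scale B u"
      unfolding supp_eq T_def by (cases "t \<in> T") (auto simp: T_def supp_eq)
  qed
  have "cs scale B (w + u) = card T + cs scale B u"
    unfolding cs_def un by (rule card_Un_disjoint[OF finT finite_supp]) (use disj in blast)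
  moreover have "cs scale B u > 0" unfolding cs_def using su finite_supp card_gt_0_iff by blast
  moreover have "w + u \<in> V.span S" using u(1) w V.span_add by blast
  then have "cs scale B (w + u) \<le> card T" using wmax unfolding T_def cs_def by blast
  ultimately show False by simp
qed

end

locale oseq =
  fixes f :: "nat \<Rightarrow> 'r::ring_1"
  assumes idem: "f n * f n = f n" and nz: "f n \<noteq> 0" and orth: "n \<noteq> m \<Longrightarrow> f n * f m = 0"
begin

definition good :: "nat \<Rightarrow> 'r \<Rightarrow> bool" where
  "good N w \<longleftrightarrow> (\<forall>j\<ge>N. f j * w = 0) \<and> w = (\<Sum>j<N. f j * w)"

definition II :: "'r set" where "II = {w. \<exists>N. good N w}"

definition nI :: "'r \<Rightarrow> nat" where "nI w = (SOME N. good N w)"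

definition Pi :: "(nat \<Rightarrow> 'r) \<Rightarrow> 'r \<Rightarrow> 'r" where
  "Pi \<sigma> w = (\<Sum>j<nI w. \<sigma> j * (f j * w))"

lemma sum_tail: "(\<And>j. j \<ge> (N::nat) \<Longrightarrow> g j = 0) \<Longrightarrow> N \<le> M \<Longrightarrow> (\<Sum>j<M. g j) = (\<Sum>j<N. g j)"
  by (rule sum.mono_neutral_right) auto

lemma good_mono: "good N w \<Longrightarrow> N \<le> M \<Longrightarrow> good M w"
  unfolding good_def
proof (intro conjI allI impI)
  assume a: "(\<forall>j\<ge>N. f j * w = 0) \<and> w = (\<Sum>j<N. f j * w)" and NM: "N \<le> M"
  then show "\<And>j. M \<le> j \<Longrightarrow> f j * w = 0" by auto
  show "w = (\<Sum>j<M. f j * w)" using a sum_tail[of N "\<lambda>j. f j * w" M] NM by auto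
qed

lemma nI: "w \<in> II \<Longrightarrow> good (nI w) w"
  unfolding II_def nI_def by (auto intro: someI_ex)

lemma good_zero: "good 0 0" unfolding good_def by simp

lemma good_add: "good N a \<Longrightarrow> good N b \<Longrightarrow> good N (a + b)"
  unfolding good_def by (auto simp: distrib_left sum.distrib)

lemma good_neg: "good N a \<Longrightarrow> good N (- a)"
  unfolding good_def by (auto simp: sum_negf)

lemma good_mult: "good N a \<Longrightarrow> good N (a * r)"
  unfolding good_def by (auto simp: mult.assoc[symmetric] sum_distrib_right[symmetric])

lemma right_ideal_II: "right_ideal II"
  unfolding right_ideal_def II_def
proof (intro conjI ballI allI)
  show "0 \<in> {w. \<exists>N. good N w}" using good_zero by auto
next
  fix x y assume "x \<in> {w. \<exists>N. good N w}" "y \<in> {w. \<exists>N. good N w}"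
  then obtain N1 N2 where "good N1 x" "good N2 y" by auto
  then have "good (max N1 N2) x" "good (max N1 N2) y" using good_mono by auto
  then show "x + y \<in> {w. \<exists>N. good N w}" using good_add by auto
next
  fix x assume "x \<in> {w. \<exists>N. good N w}"
  then show "- x \<in> {w. \<exists>N. good N w}" using good_neg by auto
next
  fix x r assume "x \<in> {w. \<exists>N. good N w}"
  then show "x * r \<in> {w. \<exists>N. good N w}" using good_mult by auto
qed

lemma sum_single: "(\<Sum>j<Suc l. g j * (f j * f l)) = g l * f l"
proof -
  have "(\<Sum>j<Suc l. g j * (f j * f l)) = (\<Sum>j<Suc l. if j = l then g l * f l else 0)"
    by (rule sum.cong) (auto simp: idem orth)
  also have "\<dots> = g l * f l" by simp
  finally show ?thesis .
qed

lemma good_f: "good (Suc l) (f l)"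
  unfolding good_def
proof (intro conjI allI impI)
  show "\<And>j. Suc l \<le> j \<Longrightarrow> f j * f l = 0" using orth by auto
  show "f l = (\<Sum>j<Suc l. f j * f l)" using sum_single[of "\<lambda>_. 1" l] by simp
qed

lemma f_II: "f l \<in> II" using good_f II_def by auto

lemma Pi_eq: "w \<in> II \<Longrightarrow> good M w \<Longrightarrow> Pi \<sigma> w = (\<Sum>j<M. \<sigma> j * (f j * w))"
proof -
  assume w: "w \<in> II" and g: "good M w"
  have g0: "good (nI w) w" using nI[OF w] .
  let ?K = "max M (nI w)"
  have z0: "\<And>j. j \<ge> nI w \<Longrightarrow> \<sigma> j * (f j * w) = 0" using g0 good_def by auto
  have z1: "\<And>j. j \<ge> M \<Longrightarrow> \<sigma> j * (f j * w) = 0" using g good_def by auto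
  have "(\<Sum>j<?K. \<sigma> j * (f j * w)) = (\<Sum>j<nI w. \<sigma> j * (f j * w))"
    using z0 by (intro sum_tail) auto
  moreover have "(\<Sum>j<?K. \<sigma> j * (f j * w)) = (\<Sum>j<M. \<sigma> j * (f j * w))"
    using z1 by (intro sum_tail) auto
  ultimately show ?thesis unfolding Pi_def by simp
qed

lemma Pi_add: "a \<in> II \<Longrightarrow> b \<in> II \<Longrightarrow> Pi \<sigma> (a + b) = Pi \<sigma> a + Pi \<sigma> b"
proof -
  assume a: "a \<in> II" and b: "b \<in> II"
  let ?K = "max (nI a) (nI b)"
  have ga: "good ?K a" and gb: "good ?K b" using nI[OF a] nI[OF b] good_mono by auto
  have gab: "good ?K (a + b)" using good_add[OF ga gb] .
  have ab: "a + b \<in> II" using gab II_def by auto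
  have "Pi \<sigma> (a + b) = (\<Sum>j<?K. \<sigma> j * (f j * (a + b)))" by (rule Pi_eq[OF ab gab])
  also have "\<dots> = (\<Sum>j<?K. \<sigma> j * (f j * a)) + (\<Sum>j<?K. \<sigma> j * (f j * b))"
    by (simp add: distrib_left sum.distrib)
  also have "\<dots> = Pi \<sigma> a + Pi \<sigma> b" by (simp only: Pi_eq[OF a ga] Pi_eq[OF b gb])
  finally show ?thesis .
qed

lemma Pi_mult: "a \<in> II \<Longrightarrow> Pi \<sigma> (a * r) = Pi \<sigma> a * r"
proof -
  assume a: "a \<in> II"
  have ga: "good (nI a) a" using nI[OF a] .
  have gar: "good (nI a) (a * r)" using good_mult[OF ga] .
  have ar: "a * r \<in> II" using gar II_def by auto
  have "Pi \<sigma> (a * r) = (\<Sum>j<nI a. \<sigma> j * (f j * (a * r)))" by (rule Pi_eq[OF ar gar])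
  also have "\<dots> = (\<Sum>j<nI a. \<sigma> j * (f j * a)) * r"
    by (simp add: sum_distrib_right mult.assoc)
  also have "\<dots> = Pi \<sigma> a * r" by (simp only: Pi_eq[OF a ga])
  finally show ?thesis .
qed

definition bin :: "(nat \<Rightarrow> 'r) \<Rightarrow> bool" where "bin \<sigma> \<longleftrightarrow> (\<forall>j. \<sigma> j = 0 \<or> \<sigma> j = 1)"

lemma f_sum: "bin \<sigma> \<Longrightarrow> good M w \<Longrightarrow> f l * (\<Sum>j<M. \<sigma> j * (f j * w)) = \<sigma> l * (f l * w)"
proof -
  assume s: "bin \<sigma>" and g: "good M w"
  have "f l * (\<Sum>j<M. \<sigma> j * (f j * w)) = (\<Sum>j<M. if j = l then \<sigma> l * (f l * w) else 0)"
    unfolding sum_distrib_left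
  proof (rule sum.cong)
    fix j assume "j \<in> {..<M}"
    have "f l * (\<sigma> j * (f j * w)) = \<sigma> j * (f l * f j * w)"
      using s[unfolded bin_def, rule_format, of j] by (auto simp: mult.assoc)
    then show "f l * (\<sigma> j * (f j * w)) = (if j = l then \<sigma> l * (f l * w) else 0)"
      by (auto simp: idem orth)
  qed simp
  also have "\<dots> = \<sigma> l * (f l * w)"
  proof (cases "l < M")
    case False
    then have "f l * w = 0" using g good_def by auto
    then show ?thesis by simp
  qed simp
  finally show ?thesis .
qed

lemma good_Pi: "bin \<sigma> \<Longrightarrow> good M w \<Longrightarrow> good M (\<Sum>j<M. \<sigma> j * (f j * w))"
proof -
  assume s: "bin \<sigma>" and g: "good M w"
  show ?thesis unfolding good_def
  proof (intro conjI allI impI)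
    fix j assume "M \<le> j"
    then show "f j * (\<Sum>j<M. \<sigma> j * (f j * w)) = 0" using f_sum[OF s g] g good_def by auto
  next
    show "(\<Sum>j<M. \<sigma> j * (f j * w)) = (\<Sum>l<M. f l * (\<Sum>j<M. \<sigma> j * (f j * w)))"
      using f_sum[OF s g] by simp
  qed
qed

lemma Pi_II: "bin \<sigma> \<Longrightarrow> w \<in> II \<Longrightarrow> Pi \<sigma> w \<in> II"
  using good_Pi[of \<sigma> "nI w" w] nI[of w] Pi_eq[of w "nI w" \<sigma>] II_def by auto

lemma Pi_Pi: "bin \<sigma> \<Longrightarrow> w \<in> II \<Longrightarrow> Pi \<tau> (Pi \<sigma> w) = Pi (\<lambda>j. \<tau> j * \<sigma> j) w"
proof -
  assume s: "bin \<sigma>" and w: "w \<in> II"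
  let ?M = "nI w"
  have g: "good ?M w" using nI[OF w] .
  have e1: "Pi \<sigma> w = (\<Sum>j<?M. \<sigma> j * (f j * w))" using Pi_eq[OF w g] .
  have g2: "good ?M (Pi \<sigma> w)" using good_Pi[OF s g] e1 by simp
  have p2: "Pi \<sigma> w \<in> II" using g2 II_def by auto
  have "Pi \<tau> (Pi \<sigma> w) = (\<Sum>l<?M. \<tau> l * (f l * Pi \<sigma> w))" using Pi_eq[OF p2 g2] .
  also have "\<dots> = (\<Sum>l<?M. \<tau> l * (\<sigma> l * (f l * w)))" unfolding e1 using f_sum[OF s g] by simp
  also have "\<dots> = Pi (\<lambda>j. \<tau> j * \<sigma> j) w" using Pi_eq[OF w g] by (simp add: mult.assoc)
  finally show ?thesis .
qed

lemma Pi_f: "Pi \<sigma> (f l) = \<sigma> l * f l"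
  using Pi_eq[OF f_II good_f] sum_single[of \<sigma> l] by simp

end

lemma (in oseq) Pi_const: "Pi (\<lambda>j. c * \<sigma> j) w = c * Pi \<sigma> w"
  unfolding Pi_def by (simp add: sum_distrib_left mult.assoc)

context bbasis
begin

lemma no_orthseq:
  assumes reg: "von_Neumann_regular TYPE('r)" and inj: "right_self_injective TYPE('r)"
    and os: "oseq (f :: nat \<Rightarrow> 'r)"
  shows False
proof -
  interpret O: oseq f by (rule os)
  define A where "A = {C::'r set. right_ideal C \<and> C \<inter> O.II = {0}}"
  have zII: "0 \<in> O.II" using O.right_ideal_II[unfolded right_ideal_def] by blast
  have zeroA: "{0} \<in> A" unfolding A_def right_ideal_def using zII by auto
  have "\<exists>M\<in>A. \<forall>X\<in>A. M \<subseteq> X \<longrightarrow> X = M"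
  proof (rule Zorn_Lemma2, intro ballI)
    fix Ch assume Ch: "Ch \<in> chains A"
    show "\<exists>U\<in>A. \<forall>X\<in>Ch. X \<subseteq> U"
    proof (cases "Ch = {}")
      case True then show ?thesis using zeroA by auto
    next
      case False
      then obtain X0 where X0: "X0 \<in> Ch" by blast
      have sub: "Ch \<subseteq> A" using Ch chainsD2 by blast
      have ri: "\<And>X. X \<in> Ch \<Longrightarrow> right_ideal X" using sub A_def by auto
      have dis: "\<And>X. X \<in> Ch \<Longrightarrow> X \<inter> O.II = {0}" using sub A_def by auto
      have ri': "\<And>X. X \<in> Ch \<Longrightarrow> 0 \<in> X \<and> (\<forall>x\<in>X. \<forall>y\<in>X. x + y \<in> X) \<and> (\<forall>x\<in>X. - x \<in> X) \<and> (\<forall>x\<in>X. \<forall>r. x * r \<in> X)"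
        using ri[unfolded right_ideal_def] by blast
      have "right_ideal (\<Union>Ch)" unfolding right_ideal_def
      proof (intro conjI ballI allI)
        show "0 \<in> \<Union>Ch" using X0 ri' by blast
      next
        fix x y assume x: "x \<in> \<Union>Ch" and y: "y \<in> \<Union>Ch"
        then obtain X Y where XY: "X \<in> Ch" "Y \<in> Ch" "x \<in> X" "y \<in> Y" by blast
        then have "X \<subseteq> Y \<or> Y \<subseteq> X" using chainsD[OF Ch] by blast
        then show "x + y \<in> \<Union>Ch"
        proof
          assume "X \<subseteq> Y" then have "x + y \<in> Y" using XY ri'[of Y] by blast
          then show ?thesis using XY by blast
        next
          assume "Y \<subseteq> X" then have "x + y \<in> X" using XY ri'[of X] by blast
          then show ?thesis using XY by blast
        qed
      next
        fix x assume "x \<in> \<Union>Ch"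
        then obtain X where "X \<in> Ch" "x \<in> X" by blast
        then show "- x \<in> \<Union>Ch" using ri' by blast
      next
        fix x r assume "x \<in> \<Union>Ch"
        then obtain X where "X \<in> Ch" "x \<in> X" by blast
        then show "x * r \<in> \<Union>Ch" using ri' by blast
      qed
      moreover have "\<Union>Ch \<inter> O.II = {0}"
      proof
        show "\<Union>Ch \<inter> O.II \<subseteq> {0}" using dis by blast
        show "{0} \<subseteq> \<Union>Ch \<inter> O.II" using X0 ri' zII by blast
      qed
      ultimately have "\<Union>Ch \<in> A" unfolding A_def by blast
      then show ?thesis by blast
    qed
  qed
  then obtain C where CA: "C \<in> A" and Cmax: "\<And>X. X \<in> A \<Longrightarrow> C \<subseteq> X \<Longrightarrow> X = C" by blast
  have riC: "right_ideal C" and disC: "C \<inter> O.II = {0}" using CA A_def by auto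
  have C0: "0 \<in> C" and Cadd: "\<And>x y. x \<in> C \<Longrightarrow> y \<in> C \<Longrightarrow> x + y \<in> C"
    and Cneg: "\<And>x. x \<in> C \<Longrightarrow> - x \<in> C" and Cmul: "\<And>x r. x \<in> C \<Longrightarrow> x * r \<in> C"
    using riC unfolding right_ideal_def by auto
  have Cdiff: "x - y \<in> C" if "x \<in> C" "y \<in> C" for x y
  proof -
    have "x + - y \<in> C" using Cadd[OF that(1) Cneg[OF that(2)]] .
    then show ?thesis by simp
  qed
  have riI: "right_ideal O.II" by (rule O.right_ideal_II)
  have I0: "0 \<in> O.II" and Iadd: "\<And>x y. x \<in> O.II \<Longrightarrow> y \<in> O.II \<Longrightarrow> x + y \<in> O.II"
    and Ineg: "\<And>x. x \<in> O.II \<Longrightarrow> - x \<in> O.II" and Imul: "\<And>x r. x \<in> O.II \<Longrightarrow> x * r \<in> O.II"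
    using riI unfolding right_ideal_def by auto
  have Idiff: "x - y \<in> O.II" if "x \<in> O.II" "y \<in> O.II" for x y
  proof -
    have "x + - y \<in> O.II" using Iadd[OF that(1) Ineg[OF that(2)]] .
    then show ?thesis by simp
  qed
  define I' where "I' = {a + c |a c. a \<in> O.II \<and> c \<in> C}"
  have II_I': "w \<in> I'" if "w \<in> O.II" for w
  proof -
    have "w = w + 0" by simp
    then show ?thesis unfolding I'_def using C0 that by blast
  qed
  have C_I': "c \<in> I'" if "c \<in> C" for c
  proof -
    have "c = 0 + c" by simp
    then show ?thesis unfolding I'_def using I0 that by blast
  qed
  have riI': "right_ideal I'" unfolding right_ideal_def
  proof (intro conjI ballI allI)
    show "0 \<in> I'" using II_I' I0 by blast
  next
    fix x y assume "x \<in> I'" "y \<in> I'"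
    then obtain a1 c1 a2 c2 where "x = a1 + c1" "y = a2 + c2" "a1 \<in> O.II" "a2 \<in> O.II" "c1 \<in> C" "c2 \<in> C"
      unfolding I'_def by blast
    then have "x + y = (a1 + a2) + (c1 + c2)" "a1 + a2 \<in> O.II" "c1 + c2 \<in> C"
      using Iadd Cadd by (auto simp: algebra_simps)
    then show "x + y \<in> I'" unfolding I'_def by blast
  next
    fix x assume "x \<in> I'"
    then obtain a c where "x = a + c" "a \<in> O.II" "c \<in> C" unfolding I'_def by blast
    then have "- x = (- a) + (- c)" "- a \<in> O.II" "- c \<in> C" using Ineg Cneg by auto
    then show "- x \<in> I'" unfolding I'_def by blast
  next
    fix x r assume "x \<in> I'"
    then obtain a c where "x = a + c" "a \<in> O.II" "c \<in> C" unfolding I'_def by blast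
    then have "x * r = a * r + c * r" "a * r \<in> O.II" "c * r \<in> C" using Imul Cmul by (auto simp: distrib_right)
    then show "x * r \<in> I'" unfolding I'_def by blast
  qed
  have I'add: "\<And>x y. x \<in> I' \<Longrightarrow> y \<in> I' \<Longrightarrow> x + y \<in> I'"
    and I'mul: "\<And>x r. x \<in> I' \<Longrightarrow> x * r \<in> I'"
    using riI' unfolding right_ideal_def by auto
  define ap where "ap v = (SOME a. a \<in> O.II \<and> v - a \<in> C)" for v
  have ap: "ap v \<in> O.II \<and> v - ap v \<in> C" if vI: "v \<in> I'" for v
  proof -
    obtain a c where "v = a + c" "a \<in> O.II" "c \<in> C" using vI unfolding I'_def by blast
    then have "\<exists>a. a \<in> O.II \<and> v - a \<in> C" by (intro exI[of _ a]) simp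
    then show ?thesis unfolding ap_def by (rule someI_ex)
  qed
  have ap_uniq: "ap v = a" if "v \<in> I'" "a \<in> O.II" "v - a \<in> C" for v a
  proof -
    have "(v - a) - (v - ap v) \<in> C" using Cdiff ap[OF that(1)] that(3) by blast
    then have "ap v - a \<in> C" by (simp add: algebra_simps)
    moreover have "ap v - a \<in> O.II" using Idiff ap[OF that(1)] that(2) by blast
    ultimately have "ap v - a \<in> C \<inter> O.II" by blast
    then have "ap v - a = 0" using disC by simp
    then show ?thesis by simp
  qed
  have ap_add: "ap (v1 + v2) = ap v1 + ap v2" if "v1 \<in> I'" "v2 \<in> I'" for v1 v2
  proof (rule ap_uniq)
    show "v1 + v2 \<in> I'" using I'add that by blast
    show "ap v1 + ap v2 \<in> O.II" using Iadd ap that by blast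
    have "(v1 - ap v1) + (v2 - ap v2) \<in> C" using Cadd ap that by blast
    then show "v1 + v2 - (ap v1 + ap v2) \<in> C" by (simp add: algebra_simps)
  qed
  have ap_mul: "ap (v * r) = ap v * r" if "v \<in> I'" for v r
  proof (rule ap_uniq)
    show "v * r \<in> I'" using I'mul that by blast
    show "ap v * r \<in> O.II" using Imul ap that by blast
    have "(v - ap v) * r \<in> C" using Cmul ap that by blast
    then show "v * r - ap v * r \<in> C" by (simp add: algebra_simps)
  qed
  have ap_II: "ap w = w" if "w \<in> O.II" for w
    using ap_uniq[OF II_I'[OF that] that] C0 by simp
  have realize: "\<exists>x. \<forall>v\<in>I'. x * v = O.Pi \<sigma> (ap v)" for \<sigma>
  proof -
    have "right_hom_on I' (\<lambda>v. O.Pi \<sigma> (ap v))" unfolding right_hom_on_def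
    proof (intro conjI ballI allI)
      fix x y assume "x \<in> I'" "y \<in> I'"
      then show "O.Pi \<sigma> (ap (x + y)) = O.Pi \<sigma> (ap x) + O.Pi \<sigma> (ap y)"
        using ap_add ap O.Pi_add by simp
    next
      fix x r assume "x \<in> I'"
      then show "O.Pi \<sigma> (ap (x * r)) = O.Pi \<sigma> (ap x) * r"
        using ap_mul ap O.Pi_mult by simp
    qed
    then obtain g where g: "right_hom_on UNIV g" "\<forall>v\<in>I'. g v = O.Pi \<sigma> (ap v)"
      using inj riI' unfolding right_self_injective_def by blast
    have "g v = g 1 * v" for v using g(1) unfolding right_hom_on_def by (metis UNIV_I mult_1_left)
    then show ?thesis using g(2) by metis
  qed
  have annih: "z = 0" if zv: "\<forall>v\<in>I'. z * v = 0" for z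
  proof (rule ccontr)
    assume z0: "z \<noteq> 0"
    obtain y where y: "z * y * z = z" using reg von_Neumann_regular_def by blast
    define e where "e = y * z"
    have ev: "e * v = 0" if "v \<in> I'" for v using zv that unfolding e_def by (simp add: mult.assoc)
    have e0: "e \<noteq> 0" using y z0 unfolding e_def by (metis mult.assoc mult_zero_right)
    define C2 where "C2 = {c + e * r |c r. c \<in> C}"
    have riC2: "right_ideal C2" unfolding right_ideal_def
    proof (intro conjI ballI allI)
      show "0 \<in> C2" unfolding C2_def using C0 by (intro CollectI exI[of _ 0]) auto
    next
      fix x1 x2 assume "x1 \<in> C2" "x2 \<in> C2"
      then obtain c1 r1 c2 r2 where "x1 = c1 + e * r1" "x2 = c2 + e * r2" "c1 \<in> C" "c2 \<in> C"
        unfolding C2_def by blast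
      then have "x1 + x2 = (c1 + c2) + e * (r1 + r2)" "c1 + c2 \<in> C" using Cadd by (auto simp: algebra_simps)
      then show "x1 + x2 \<in> C2" unfolding C2_def by blast
    next
      fix x assume "x \<in> C2"
      then obtain c r where "x = c + e * r" "c \<in> C" unfolding C2_def by blast
      then have "- x = (- c) + e * (- r)" "- c \<in> C" using Cneg by auto
      then show "- x \<in> C2" unfolding C2_def by blast
    next
      fix x s assume "x \<in> C2"
      then obtain c r where "x = c + e * r" "c \<in> C" unfolding C2_def by blast
      then have "x * s = c * s + e * (r * s)" "c * s \<in> C" using Cmul by (auto simp: algebra_simps)
      then show "x * s \<in> C2" unfolding C2_def by blast
    qed
    have disC2: "C2 \<inter> O.II = {0}"
    proof
      have "0 \<in> C2" using riC2[unfolded right_ideal_def] by blast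
      then show "{0} \<subseteq> C2 \<inter> O.II" using I0 by blast
      show "C2 \<inter> O.II \<subseteq> {0}"
      proof
        fix x assume x: "x \<in> C2 \<inter> O.II"
        then obtain c r where cr: "x = c + e * r" "c \<in> C" unfolding C2_def by blast
        have "e * r = x + (- c)" using cr by simp
        moreover have "x + (- c) \<in> I'" unfolding I'_def using x Cneg cr(2) by blast
        ultimately have "e * (e * r) = 0" using ev by simp
        then have "e * r = 0" using y unfolding e_def by (metis mult.assoc)
        then have "x \<in> C \<inter> O.II" using cr x by simp
        then show "x \<in> {0}" using disC by blast
      qed
    qed
    have "C \<subseteq> C2"
    proof
      fix c assume "c \<in> C"
      moreover have "c = c + e * 0" by simp
      ultimately show "c \<in> C2" unfolding C2_def by blast
    qed
    then have "C2 = C" using Cmax riC2 disC2 A_def by blast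
    moreover have "e \<in> C2" unfolding C2_def using C0 by (intro CollectI exI[of _ 0] exI[of _ 1]) simp
    ultimately have "e \<in> I'" using C_I' by blast
    then have "e * e = 0" using ev by blast
    moreover have "e * e = e" unfolding e_def using y by (metis mult.assoc)
    ultimately show False using e0 by simp
  qed
  define blk where "blk j = fst (prod_decode j)" for j :: nat
  define sig where "sig i j = (if blk j = i then 1 else (0::'r))" for i j :: nat
  have binsig: "O.bin (sig i)" for i unfolding O.bin_def sig_def by auto
  define xs where "xs i = (SOME x. \<forall>v\<in>I'. x * v = O.Pi (sig i) (ap v))" for i
  have xs: "\<forall>v\<in>I'. xs i * v = O.Pi (sig i) (ap v)" for i
    unfolding xs_def using realize[of "sig i"] by (rule someI_ex)
  have xs_II: "xs i * w = O.Pi (sig i) w" if "w \<in> O.II" for i w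
    using xs[of i] II_I'[OF that] ap_II[OF that] by simp
  have xs_f: "xs i * f l = sig i l * f l" for i l
    using xs_II[OF O.f_II] O.Pi_f by simp
  have large: "\<exists>r. n \<le> cs scale B (r * xs i)" for i n
  proof -
    define Ai where "Ai = {j. blk j = i}"
    have "inj (\<lambda>t. prod_encode (i, t))" by (auto simp: inj_on_def prod_encode_eq)
    moreover have "range (\<lambda>t. prod_encode (i, t)) \<subseteq> Ai" unfolding Ai_def blk_def by auto
    ultimately have infA: "infinite Ai" using infinite_UNIV_nat by (meson finite_imageD finite_subset)
    obtain J where J: "finite J" "card J = n" "J \<subseteq> Ai" using infinite_arbitrarily_large[OF infA] by blast
    define u where "u j = f j * xs i" for j
    have uf: "u j * f l = (if j = l then f l else 0)" if "l \<in> Ai" for j l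
    proof -
      have "u j * f l = f j * (sig i l * f l)" unfolding u_def by (simp add: mult.assoc xs_f)
      also have "\<dots> = f j * f l" using that unfolding sig_def Ai_def by simp
      finally show ?thesis using O.idem O.orth by auto
    qed
    have injU: "inj_on u J"
    proof
      fix j l assume jl: "j \<in> J" "l \<in> J" "u j = u l"
      show "j = l"
      proof (rule ccontr)
        assume "j \<noteq> l"
        have "u j * f j = f j" using uf[of j j] jl J(3) by auto
        moreover have "u l * f j = 0" using uf[of j l] jl J(3) \<open>j \<noteq> l\<close> by auto
        ultimately show False using jl(3) O.nz by metis
      qed
    qed
    define S where "S = u ` J"
    have finS: "finite S" using J(1) S_def by simp
    have cardS: "card S = n" using card_image[OF injU] J(2) S_def by simp
    have indS: "V.independent S"
    proof (rule V.independent_if_scalars_zero[OF finS])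
      fix c x assume sum0: "(\<Sum>x\<in>S. scale (c x) x) = 0" and xS: "x \<in> S"
      then obtain l where l: "l \<in> J" "x = u l" unfolding S_def by blast
      have lA: "l \<in> Ai" using l J(3) by blast
      have "0 = (\<Sum>x\<in>S. scale (c x) x) * f l" using sum0 by simp
      also have "\<dots> = (\<Sum>j\<in>J. scale (c (u j)) (u j * f l))"
        unfolding S_def by (simp add: sum.reindex[OF injU] sum_distrib_right scale_mult_left)
      also have "\<dots> = (\<Sum>j\<in>J. if j = l then scale (c (u l)) (f l) else 0)"
        by (rule sum.cong) (auto simp: uf[OF lA])
      also have "\<dots> = scale (c (u l)) (f l)" using l(1) J(1) by simp
      finally have "scale (c x) (f l) = 0" using l by simp
      then show "c x = 0" using O.nz by simp
    qed
    obtain w where w: "w \<in> V.span S" "n \<le> cs scale B w" using big_supp[OF finS indS] cardS by auto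
    have sub: "V.subspace (range (\<lambda>r. r * xs i))"
    proof (rule V.subspaceI)
      show "0 \<in> range (\<lambda>r. r * xs i)" by (metis mult_zero_left rangeI)
      fix x y assume "x \<in> range (\<lambda>r. r * xs i)" "y \<in> range (\<lambda>r. r * xs i)"
      then obtain a b where "x = a * xs i" "y = b * xs i" by blast
      then have "x + y = (a + b) * xs i" by (simp add: distrib_right)
      then show "x + y \<in> range (\<lambda>r. r * xs i)" by blast
    next
      fix c x assume "x \<in> range (\<lambda>r. r * xs i)"
      then obtain a where "x = a * xs i" by blast
      then have "scale c x = scale c a * xs i" by (simp add: scale_mult_left)
      then show "scale c x \<in> range (\<lambda>r. r * xs i)" by blast
    qed
    have "S \<subseteq> range (\<lambda>r. r * xs i)" unfolding S_def u_def by blast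
    then have "V.span S \<subseteq> range (\<lambda>r. r * xs i)" using V.span_minimal sub by blast
    then show ?thesis using w by blast
  qed
  define rr where "rr i = (SOME r. k * i * cs scale B (xs i) + 1 \<le> cs scale B (r * xs i))" for i
  have rr: "k * i * cs scale B (xs i) + 1 \<le> cs scale B (rr i * xs i)" for i
    unfolding rr_def using large by (rule someI_ex)
  define tau where "tau j = rr (blk j)" for j
  obtain g where g: "\<forall>v\<in>I'. g * v = O.Pi tau (ap v)" using realize by blast
  have gx: "g * xs i = rr i * xs i" for i
  proof -
    have "g * xs i - rr i * xs i = 0"
    proof (rule annih, intro ballI)
      fix v assume v: "v \<in> I'"
      have av: "ap v \<in> O.II" using ap[OF v] by blast
      define p where "p = xs i * v"
      have p: "p = O.Pi (sig i) (ap v)" using xs v p_def by blast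
      have pII: "p \<in> O.II" using O.Pi_II[OF binsig av] p by simp
      have "g * p = O.Pi tau p" using g II_I'[OF pII] ap_II[OF pII] by simp
      also have "\<dots> = O.Pi (\<lambda>j. tau j * sig i j) (ap v)" using O.Pi_Pi[OF binsig av] p by simp
      also have "(\<lambda>j. tau j * sig i j) = (\<lambda>j. rr i * sig i j)"
        by (rule ext) (simp add: tau_def sig_def)
      also have "O.Pi (\<lambda>j. rr i * sig i j) (ap v) = rr i * p" using O.Pi_const p by simp
      finally have "g * p = rr i * p" .
      then show "(g * xs i - rr i * xs i) * v = 0" unfolding p_def by (simp add: algebra_simps mult.assoc)
    qed
    then show ?thesis by simp
  qed
  define i where "i = cs scale B g"
  have "cs scale B (g * xs i) \<le> k * cs scale B g * cs scale B (xs i)" by (rule cs_mult)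
  then have "cs scale B (rr i * xs i) \<le> k * i * cs scale B (xs i)" using gx i_def by simp
  then show False using rr[of i] by simp
qed

end

theorem lemma5p4:
  fixes scale :: "'k::field \<Rightarrow> 'r::ring_1 \<Rightarrow> 'r"
    and B :: "'r set"
  assumes "is_K_algebra scale"
    and "von_Neumann_regular TYPE('r)"
    and "right_self_injective TYPE('r)"
    and "bounded_basis scale B"
  shows "completely_reducible TYPE('r)"
proof (rule reduce[OF assms(2)])
  show "\<not> (\<exists>f::nat \<Rightarrow> 'r. orthseq f)"
  proof
    assume "\<exists>f::nat \<Rightarrow> 'r. orthseq f"
    then obtain f :: "nat \<Rightarrow> 'r" where f: "orthseq f" by blast
    obtain k where kb: "k_bounded scale B k" and bas: "is_basis scale B"
      using assms(4) unfolding bounded_basis_def by blast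
    interpret bb: bbasis scale B k using assms(1) bas kb by unfold_locales
    have "oseq f" using f unfolding orthseq_def by unfold_locales auto
    then show False using bb.no_orthseq[OF assms(2) assms(3)] by blast
  qed
qed

end
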